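(* Let $\pi$ be a finitely refining sequence of partitions of $[0,1]$ and $x\in C^0([0,1],\mathbb R)$. Define for all $m\ge0$, $0\le k\le N(\pi^{m+1})-N(\pi^m)-1$, writing $t_j=t^{m,k}_j$, $$\theta_{m,k}=\frac{(x(t_2)-x(t_1))(t_3-t_2)-(x(t_3)-x(t_2))(t_2-t_1)}{\sqrt{(t_2-t_1)(t_3-t_2)(t_3-t_1)}}.$$ Then $$x(t)=x(0)+(x(1)-x(0))t+\sum_{m=0}^{\infty}\sum_{k=0}^{N(\pi^{m+1})-N(\pi^m)-1}\theta_{m,k}e^\pi_{m,k}(t),$$ where the partial sums over $m\le N-1$ converge to $x$ uniformly on $[0,1]$ as $N\to\infty$. Moreover this representation is unique: if $x(t)=x(0)+(x(1)-x(0))t+\sum_m\sum_k\theta'_{m,k}e^\pi_{m,k}(t)$ for all $t$ with real coefficients $\theta'_{m,k}$, then $\theta'_{m,k}=\theta_{m,k}$ for all $m,k$.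
   Context: A partition of $[0,1]$ is a finite set $\{0=t_0<t_1<\dots<t_N=1\}$; for a partition $\pi^n=\{0=t^n_0<\dots<t^n_{N(\pi^n)}=1\}$, $N(\pi^n)$ is its number of intervals, $|\pi^n|=\max_i(t^n_{i+1}-t^n_i)$ and $\underline{\pi^n}=\min_i(t^n_{i+1}-t^n_i)$. A sequence $\pi=(\pi^n)_{n\ge0}$ of partitions of $[0,1]$, with the convention $\pi^0=\{0,1\}$, is finitely refining if $\pi^n\subseteq\pi^{n+1}$ for all $n$, $|\pi^n|\to0$, and there is $M<\infty$ such that for every $n$ each interval $[t^n_i,t^n_{i+1}]$ contains at most $M$ points of $\pi^{n+1}$. Haar and Schauder functions of a finitely refining $\pi$: for each level $m\ge0$ and each interval $[u_0,u_r]$ of $\pi^m$, let $u_0<u_1<\dots<u_r$ be the points of $\pi^{m+1}$ lying in $[u_0,u_r]$. For each $i\in\{2,\dots,r\}$ put $t_1=u_0$, $t_2=u_{i-1}$, $t_3=u_i$ and define $\psi(s)=\sqrt{\frac{t_3-t_2}{(t_2-t_1)(t_3-t_1)}}$ for $s\in[t_1,t_2)$, $\psi(s)=-\sqrt{\frac{t_2-t_1}{(t_3-t_2)(t_3-t_1)}}$ for $s\in[t_2,t_3)$, $\psi(s)=0$ otherwise, and $e(t)=\int_0^t\psi(s)\,ds$ (a continuous hat function vanishing outside $[t_1,t_3]$, affine on $[t_1,t_2]$ and on $[t_2,t_3]$, maximal at $t_2$). Ranging over all intervals of $\pi^m$ and all such $i$ gives $N(\pi^{m+1})-N(\pi^m)$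 functions at level $m$, enumerated in a fixed order as $\psi_{m,k}$, $e^\pi_{m,k}$, $k=0,\dots,N(\pi^{m+1})-N(\pi^m)-1$, with associated points $t^{m,k}_1<t^{m,k}_2<t^{m,k}_3$ (so $[t^{m,k}_1,t^{m,k}_3]$ is the support of $e^\pi_{m,k}$ and $t^{m,k}_2$ its maximum point). The $\psi_{m,k}$ are the Haar functions and the $e^\pi_{m,k}$ the Schauder functions of $\pi$. *)

theory Defs
  imports "HOL-Analysis.Analysis"
begin

definition is_partition :: "real set \<Rightarrow> bool" where
  "is_partition P \<longleftrightarrow> finite P \<and> 0 \<in> P \<and> 1 \<in> P \<and> P \<subseteq> {0..1}"

definition consecutive :: "real set \<Rightarrow> real \<Rightarrow> real \<Rightarrow> bool" where
  "consecutive P a b \<longleftrightarrow> a \<in> P \<and> b \<in> P \<and> a < b \<and> {a<..<b} \<inter> P = {}"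

definition mesh :: "real set \<Rightarrow> real" where
  "mesh P = Max {b - a | a b. consecutive P a b}"

definition num_intervals :: "real set \<Rightarrow> nat" where
  "num_intervals P = card P - 1"

definition finitely_refining :: "(nat \<Rightarrow> real set) \<Rightarrow> bool" where
  "finitely_refining \<pi> \<longleftrightarrow>
     (\<forall>n. is_partition (\<pi> n)) \<and> \<pi> 0 = {0, 1} \<and>
     (\<forall>n. \<pi> n \<subseteq> \<pi> (Suc n)) \<and>
     (\<lambda>n. mesh (\<pi> n)) \<longlonglongrightarrow> 0 \<and>
     (\<exists>M::nat. \<forall>n a b. consecutive (\<pi> n) a b \<longrightarrow> card (\<pi> (Suc n) \<inter> {a..b}) \<le> M)"

definition haar :: "real \<Rightarrow> real \<Rightarrow> real \<Rightarrow> real \<Rightarrow> real" where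
  "haar t1 t2 t3 s =
     (if t1 \<le> s \<and> s < t2 then sqrt ((t3 - t2) / ((t2 - t1) * (t3 - t1)))
      else if t2 \<le> s \<and> s < t3 then - sqrt ((t2 - t1) / ((t3 - t2) * (t3 - t1)))
      else 0)"

definition schauder :: "real \<Rightarrow> real \<Rightarrow> real \<Rightarrow> real \<Rightarrow> real" where
  "schauder t1 t2 t3 t = integral {0..t} (haar t1 t2 t3)"

text \<open>Level-m Haar/Schauder functions are in one-to-one correspondence with the new
  points s of \<pi>(m+1) not in \<pi> m: t2 = s, t1 = left endpoint of the interval of \<pi> m
  containing s, t3 = successor of s in \<pi>(m+1).\<close>
definition pt1 :: "(nat \<Rightarrow> real set) \<Rightarrow> nat \<Rightarrow> real \<Rightarrow> real" where
  "pt1 \<pi> m s = Max {u \<in> \<pi> m. u < s}"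

definition pt3 :: "(nat \<Rightarrow> real set) \<Rightarrow> nat \<Rightarrow> real \<Rightarrow> real" where
  "pt3 \<pi> m s = Min {u \<in> \<pi> (Suc m). s < u}"

definition level_count :: "(nat \<Rightarrow> real set) \<Rightarrow> nat \<Rightarrow> nat" where
  "level_count \<pi> m = num_intervals (\<pi> (Suc m)) - num_intervals (\<pi> m)"

text \<open>With a fixed enumeration enum m : {0..<level_count} \<rightarrow> \<pi>(m+1) - \<pi> m of the level-m
  middle points, the points t^{m,k}_j:\<close>
definition tk1 where "tk1 \<pi> enum m k = pt1 \<pi> m (enum m k)"
definition tk2 where "tk2 (\<pi> :: nat \<Rightarrow> real set) (enum :: nat \<Rightarrow> nat \<Rightarrow> real) m k = enum m k"
definition tk3 where "tk3 \<pi> enum m k = pt3 \<pi> m (enum m k)"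

definition schauder_fun :: "(nat \<Rightarrow> real set) \<Rightarrow> (nat \<Rightarrow> nat \<Rightarrow> real) \<Rightarrow> nat \<Rightarrow> nat \<Rightarrow> real \<Rightarrow> real" where
  "schauder_fun \<pi> enum m k = schauder (tk1 \<pi> enum m k) (tk2 \<pi> enum m k) (tk3 \<pi> enum m k)"

definition theta :: "(real \<Rightarrow> real) \<Rightarrow> (nat \<Rightarrow> real set) \<Rightarrow> (nat \<Rightarrow> nat \<Rightarrow> real) \<Rightarrow> nat \<Rightarrow> nat \<Rightarrow> real" where
  "theta x \<pi> enum m k =
     (let t1 = tk1 \<pi> enum m k; t2 = tk2 \<pi> enum m k; t3 = tk3 \<pi> enum m k in
      ((x t2 - x t1) * (t3 - t2) - (x t3 - x t2) * (t2 - t1)) /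
        sqrt ((t2 - t1) * (t3 - t2) * (t3 - t1)))"

definition schauder_partial ::
  "(real \<Rightarrow> real) \<Rightarrow> (nat \<Rightarrow> real set) \<Rightarrow> (nat \<Rightarrow> nat \<Rightarrow> real) \<Rightarrow> (nat \<Rightarrow> nat \<Rightarrow> real) \<Rightarrow> nat \<Rightarrow> real \<Rightarrow> real" where
  "schauder_partial x \<pi> enum c N t =
     x 0 + (x 1 - x 0) * t + (\<Sum>m<N. \<Sum>k<level_count \<pi> m. c m k * schauder_fun \<pi> enum m k t)"

end

theory Submission
  imports Defs
begin

lemma ico_int:
  fixes a b c :: real
  assumes "a \<le> b"
  shows "((\<lambda>_. c) has_integral (b - a) * c) {a..<b}"
proof -
  have "((\<lambda>_. c) has_integral (b - a) * c) {a..b}"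
    using has_integral_const_real[of c a b] assms by simp
  moreover have n1: "negligible {y \<in> {a..b} - {a..<b}. c \<noteq> 0}"
    by (rule negligible_subset[of "{b}"]) auto
  moreover have n2: "negligible {y \<in> {a..<b} - {a..b}. c \<noteq> 0}"
    by (rule negligible_subset[of "{}"]) auto
  ultimately show ?thesis using has_integral_spike_set_eq[OF n1 n2] by blast
qed

lemma piece_int:
  fixes t1 t2 t c :: real
  assumes "0 \<le> t1" "t1 \<le> t2" "0 \<le> t"
  shows "((\<lambda>s. if s \<in> {t1..<t2} then c else 0) has_integral (max t1 (min t t2) - t1) * c) {0..t}"
proof -
  let ?m = "max t1 (min t t2)"
  have "((\<lambda>_. c) has_integral (?m - t1) * c) {t1..<?m}"
    by (rule ico_int) simp
  moreover have n1: "negligible {y \<in> {t1..<?m} - {t1..<t2} \<inter> {0..t}. c \<noteq> 0}"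
    by (rule negligible_subset[of "{}"]) (use assms in auto)
  moreover have n2: "negligible {y \<in> {t1..<t2} \<inter> {0..t} - {t1..<?m}. c \<noteq> 0}"
    by (rule negligible_subset[of "{t}"]) (use assms in auto)
  ultimately have "((\<lambda>_. c) has_integral (?m - t1) * c) ({t1..<t2} \<inter> {0..t})"
    using has_integral_spike_set_eq[OF n1 n2] by blast
  then show ?thesis using has_integral_restrict_Int[of "{t1..<t2}" "\<lambda>_. c"] by simp
qed

definition h1 :: "real \<Rightarrow> real \<Rightarrow> real \<Rightarrow> real" where
  "h1 t1 t2 t3 = sqrt ((t3 - t2) / ((t2 - t1) * (t3 - t1)))"
definition h2 :: "real \<Rightarrow> real \<Rightarrow> real \<Rightarrow> real" where
  "h2 t1 t2 t3 = sqrt ((t2 - t1) / ((t3 - t2) * (t3 - t1)))"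

lemma schauder_formula:
  assumes "0 \<le> t1" "t1 < t2" "t2 < t3" "0 \<le> t"
  shows "schauder t1 t2 t3 t = (max t1 (min t t2) - t1) * h1 t1 t2 t3 - (max t2 (min t t3) - t2) * h2 t1 t2 t3"
proof -
  have e: "haar t1 t2 t3 = (\<lambda>s. (if s \<in> {t1..<t2} then h1 t1 t2 t3 else 0) + (if s \<in> {t2..<t3} then - h2 t1 t2 t3 else 0))"
    using assms by (auto simp: haar_def h1_def h2_def fun_eq_iff)
  have "(haar t1 t2 t3 has_integral (max t1 (min t t2) - t1) * h1 t1 t2 t3 + (max t2 (min t t3) - t2) * (- h2 t1 t2 t3)) {0..t}"
    unfolding e by (intro has_integral_add piece_int) (use assms in auto)
  then show ?thesis unfolding schauder_def by (simp add: integral_unique)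
qed

lemma h_rel:
  assumes "t1 < t2" "t2 < t3"
  shows "(t2 - t1) * h1 t1 t2 t3 = (t3 - t2) * h2 t1 t2 t3"
proof -
  have "(t2 - t1) * h1 t1 t2 t3 = sqrt ((t2-t1)^2) * h1 t1 t2 t3" using assms by simp
  also have "\<dots> = sqrt ((t2-t1)^2 * ((t3 - t2) / ((t2 - t1) * (t3 - t1))))" unfolding h1_def real_sqrt_mult ..
  also have "(t2-t1)^2 * ((t3 - t2) / ((t2 - t1) * (t3 - t1))) = (t3-t2)^2 * ((t2 - t1) / ((t3 - t2) * (t3 - t1)))"
    using assms by (simp add: power2_eq_square)
  also have "sqrt ((t3-t2)^2 * ((t2 - t1) / ((t3 - t2) * (t3 - t1)))) = sqrt ((t3-t2)^2) * h2 t1 t2 t3" unfolding h2_def real_sqrt_mult ..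
  also have "\<dots> = (t3 - t2) * h2 t1 t2 t3" using assms by simp
  finally show ?thesis .
qed

lemma h1_pos: "t1 < t2 \<Longrightarrow> t2 < t3 \<Longrightarrow> h1 t1 t2 t3 > 0"
  unfolding h1_def by simp

lemma alg1: "(d1::real)>0 \<Longrightarrow> d2>0 \<Longrightarrow> d>0 \<Longrightarrow> (d2/(d1*d))/(d1*d2*d) = (1/(d1*d))^2"
  by (simp add: field_simps power2_eq_square)
lemma alg2: "(d1::real)>0 \<Longrightarrow> d2>0 \<Longrightarrow> d>0 \<Longrightarrow> (d1/(d2*d))/(d1*d2*d) = (1/(d2*d))^2"
  by (simp add: field_simps power2_eq_square)

lemma th1:
  assumes "t1 < t2" "t2 < t3"
  shows "h1 t1 t2 t3 / sqrt ((t2 - t1) * (t3 - t2) * (t3 - t1)) = 1 / ((t2 - t1) * (t3 - t1))"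
proof -
  have "h1 t1 t2 t3 / sqrt ((t2 - t1) * (t3 - t2) * (t3 - t1)) = sqrt (((t3 - t2) / ((t2 - t1) * (t3 - t1))) / ((t2 - t1) * (t3 - t2) * (t3 - t1)))"
    unfolding h1_def real_sqrt_divide ..
  also have "\<dots> = sqrt ((1 / ((t2 - t1) * (t3 - t1)))^2)"
    using assms alg1[of "t2-t1" "t3-t2" "t3-t1"] by simp
  also have "\<dots> = 1 / ((t2 - t1) * (t3 - t1))" using assms by simp
  finally show ?thesis .
qed

lemma th2:
  assumes "t1 < t2" "t2 < t3"
  shows "h2 t1 t2 t3 / sqrt ((t2 - t1) * (t3 - t2) * (t3 - t1)) = 1 / ((t3 - t2) * (t3 - t1))"
proof -
  have "h2 t1 t2 t3 / sqrt ((t2 - t1) * (t3 - t2) * (t3 - t1)) = sqrt (((t2 - t1) / ((t3 - t2) * (t3 - t1))) / ((t2 - t1) * (t3 - t2) * (t3 - t1)))"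
    unfolding h2_def real_sqrt_divide ..
  also have "\<dots> = sqrt ((1 / ((t3 - t2) * (t3 - t1)))^2)"
    using assms alg2[of "t2-t1" "t3-t2" "t3-t1"] by simp
  also have "\<dots> = 1 / ((t3 - t2) * (t3 - t1))" using assms by simp
  finally show ?thesis .
qed

definition numer :: "(real \<Rightarrow> real) \<Rightarrow> real \<Rightarrow> real \<Rightarrow> real \<Rightarrow> real" where
  "numer x a s c = (x s - x a) * (c - s) - (x c - x s) * (s - a)"

definition Tf :: "(real \<Rightarrow> real) \<Rightarrow> real \<Rightarrow> real \<Rightarrow> real \<Rightarrow> real \<Rightarrow> real" where
  "Tf x a s c t = (max a (min t s) - a) * numer x a s c / ((s - a) * (c - a))
      - (max s (min t c) - s) * numer x a s c / ((c - s) * (c - a))"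

lemma aux_ts: "(N::real)/q*(A*p - B*r) = A*N*(p/q) - B*N*(r/q)"
  by (cases "q=0") (simp_all add: field_simps)

lemma theta_schauder:
  assumes "0 \<le> a" "a < s" "s < c" "0 \<le> t"
  shows "numer x a s c / sqrt ((s - a) * (c - s) * (c - a)) * schauder a s c t = Tf x a s c t"
proof -
  let ?q = "sqrt ((s - a) * (c - s) * (c - a))"
  have "numer x a s c / ?q * schauder a s c t =
     (max a (min t s) - a) * numer x a s c * (h1 a s c / ?q) - (max s (min t c) - s) * numer x a s c * (h2 a s c / ?q)"
    unfolding schauder_formula[OF assms] by (rule aux_ts)
  also have "\<dots> = Tf x a s c t" using assms by (simp add: th1 th2 Tf_def)
  finally show ?thesis .
qed

lemma alg5: "(p::real) \<noteq> 0 \<Longrightarrow> q \<noteq> 0 \<Longrightarrow> xa + (xs-xa)*r/p = xa + (xc-xa)*r/q + r*((xs-xa)*(q-p) - (xc-xs)*p)/(p*q)"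
  by (simp add: field_simps)
lemma alg6: "(p::real) \<noteq> 0 \<Longrightarrow> q \<noteq> 0 \<Longrightarrow> q - p \<noteq> 0 \<Longrightarrow> xs + (xc-xs)*r/(q-p) = xa + (xc-xa)*(p+r)/q + (p*((xs-xa)*(q-p) - (xc-xs)*p)/(p*q) - r*((xs-xa)*(q-p) - (xc-xs)*p)/((q-p)*q))"
  by (simp add: field_simps)
lemma alg_err: "(d::real) \<noteq> 0 \<Longrightarrow> xa + (xb-xa)*r/d - xt = (xa-xt)*((d - r)/d) + (xb-xt)*(r/d)"
  by (simp add: field_simps)

definition lo :: "real set \<Rightarrow> real \<Rightarrow> real" where "lo P t = Max {u\<in>P. u < t}"
definition hi :: "real set \<Rightarrow> real \<Rightarrow> real" where "hi P t = Min {u\<in>P. t < u}"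
definition interp :: "(real \<Rightarrow> real) \<Rightarrow> real set \<Rightarrow> real \<Rightarrow> real" where
  "interp x P t = (if t \<in> P then x t else
     x (lo P t) + (x (hi P t) - x (lo P t)) * (t - lo P t) / (hi P t - lo P t))"

lemma lo_eqI: "finite P \<Longrightarrow> a \<in> P \<Longrightarrow> a < t \<Longrightarrow> (\<And>u. u \<in> P \<Longrightarrow> u < t \<Longrightarrow> u \<le> a) \<Longrightarrow> lo P t = a"
  unfolding lo_def by (rule Max_eqI) auto
lemma hi_eqI: "finite P \<Longrightarrow> a \<in> P \<Longrightarrow> t < a \<Longrightarrow> (\<And>u. u \<in> P \<Longrightarrow> t < u \<Longrightarrow> a \<le> u) \<Longrightarrow> hi P t = a"
  unfolding hi_def by (rule Min_eqI) auto

lemma lo_props: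
  assumes "finite P" "u0 \<in> P" "u0 < t"
  shows "lo P t \<in> P" "lo P t < t" "\<And>u. u \<in> P \<Longrightarrow> u < t \<Longrightarrow> u \<le> lo P t"
proof -
  have f: "finite {u\<in>P. u < t}" and ne: "{u\<in>P. u < t} \<noteq> {}" using assms by auto
  show "lo P t \<in> P" "lo P t < t" using Max_in[OF f ne] unfolding lo_def by auto
  show "\<And>u. u \<in> P \<Longrightarrow> u < t \<Longrightarrow> u \<le> lo P t" unfolding lo_def using f by (intro Max_ge) auto
qed

lemma hi_props:
  assumes "finite P" "u0 \<in> P" "t < u0"
  shows "hi P t \<in> P" "t < hi P t" "\<And>u. u \<in> P \<Longrightarrow> t < u \<Longrightarrow> hi P t \<le> u"
proof -
  have f: "finite {u\<in>P. t < u}" and ne: "{u\<in>P. t < u} \<noteq> {}" using assms by auto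
  show "hi P t \<in> P" "t < hi P t" using Min_in[OF f ne] unfolding hi_def by auto
  show "\<And>u. u \<in> P \<Longrightarrow> t < u \<Longrightarrow> hi P t \<le> u" unfolding hi_def using f by (intro Min_le) auto
qed

lemma interp_in: "t \<in> P \<Longrightarrow> interp x P t = x t" by (simp add: interp_def)

lemma insert_step:
  assumes P: "finite P" and sP: "s \<notin> P" and aP: "a \<in> P" and cP: "c \<in> P" and as: "a < s" and sc: "s < c"
    and below: "\<And>u. u \<in> P \<Longrightarrow> u < s \<Longrightarrow> u \<le> a"
    and above: "\<And>u. u \<in> P \<Longrightarrow> s < u \<Longrightarrow> c \<le> u"
    and l: "l \<in> P" "l \<le> t" and r: "r \<in> P" "t \<le> r"
  shows "interp x (insert s P) t = interp x P t + Tf x a s c t"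
proof -
  have P': "finite (insert s P)" using P by simp
  let ?N = "numer x a s c"
  have split: "\<And>u. u \<in> P \<Longrightarrow> u \<le> a \<or> c \<le> u"
    using below above sP by (metis linorder_neqE_linordered_idom)
  consider "t \<in> P" | "t = s" | "t \<notin> P" "t < a" | "t \<notin> P" "c < t" | "a < t" "t < s" | "s < t" "t < c"
    using aP cP by (cases "t \<in> P"; cases "t = s"; linarith?) force+
  then show ?thesis
  proof cases
    case 1
    then have "t \<le> a \<or> c \<le> t" using below above sP by (cases "t < s") (auto, force)
    then have "Tf x a s c t = 0" using as sc
      by (auto simp: Tf_def max_def min_def)
    then show ?thesis using 1 by (simp add: interp_in)
  next
    case 2
    have "lo P s = a" by (rule lo_eqI) (use P aP as below in auto)
    moreover have "hi P s = c" by (rule hi_eqI) (use P cP sc above in auto)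
    moreover have "Tf x a s c s = ?N / (c - a)" using as sc by (simp add: Tf_def)
    ultimately show ?thesis using 2 sP as sc
      by (simp add: interp_def numer_def field_simps)
  next
    case 3
    from 3 obtain l' where "l' \<in> P" "l' < t" using l by force
    have "lo (insert s P) t = lo P t" unfolding lo_def using 3 as by (intro arg_cong[where f=Max]) auto
    moreover have "hi (insert s P) t = hi P t"
    proof -
      have "hi P t \<le> a" using hi_props(3)[OF P aP 3(2)] 3 aP by auto
      then show ?thesis by (intro hi_eqI) (use P' hi_props[OF P aP 3(2)] as in auto)
    qed
    moreover have "Tf x a s c t = 0" using 3 as sc by (simp add: Tf_def)
    ultimately show ?thesis using 3 sP as by (simp add: interp_def)
  next
    case 4
    have "hi (insert s P) t = hi P t" unfolding hi_def using 4 sc by (intro arg_cong[where f=Min]) auto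
    moreover have "lo (insert s P) t = lo P t"
    proof -
      have "c \<le> lo P t" using lo_props(3)[OF P cP 4(2)] 4 cP by auto
      then show ?thesis by (intro lo_eqI) (use P' lo_props[OF P cP 4(2)] sc in auto)
    qed
    moreover have "Tf x a s c t = 0" using 4 as sc by (simp add: Tf_def)
    ultimately show ?thesis using 4 sP sc by (simp add: interp_def)
  next
    case 5
    have tP: "t \<notin> P" using 5 below by force
    have "lo (insert s P) t = a" by (rule lo_eqI) (use P aP 5 below in auto)
    moreover have "lo P t = a" by (rule lo_eqI) (use P aP 5 below in auto)
    moreover have "hi (insert s P) t = s"
      by (rule hi_eqI; use P P' aP cP split sP 5 below sP in fastforce)
    moreover have "hi P t = c"
    proof (rule hi_eqI[OF P cP])
      show "t < c" using 5 sc by simp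
      fix u assume "u \<in> P" "t < u" then show "c \<le> u" using split[of u] 5 by linarith
    qed
    moreover have "Tf x a s c t = (t - a) * ?N / ((s - a) * (c - a))" using 5 as sc by (simp add: Tf_def)
    moreover have e: "(c - a) - (s - a) = c - s" by simp
    moreover note alg5[of "s-a" "c-a" "x a" "x s" "t-a" "x c", unfolded e]
    ultimately show ?thesis using 5 tP sP as sc
      by (simp add: interp_def numer_def)
  next
    case 6
    have tP: "t \<notin> P" using 6 above by force
    have "hi (insert s P) t = c" by (rule hi_eqI) (use P cP 6 above in auto)
    moreover have "hi P t = c" by (rule hi_eqI) (use P cP 6 above in auto)
    moreover have "lo (insert s P) t = s"
      by (rule lo_eqI; use P P' aP cP split sP 6 above sP in fastforce)
    moreover have "lo P t = a"
    proof (rule lo_eqI[OF P aP])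
      show "a < t" using 6 as by simp
      fix u assume "u \<in> P" "u < t" then show "u \<le> a" using split[of u] 6 by linarith
    qed
    moreover have "Tf x a s c t = (s - a) * ?N / ((s - a) * (c - a)) - (t - s) * ?N / ((c - s) * (c - a))"
      using 6 as sc by (simp add: Tf_def)
    moreover have e: "(c - a) - (s - a) = c - s" "(s - a) + (t - s) = t - a" by simp_all
    moreover note alg6[of "s-a" "c-a" "x s" "x c" "t-s" "x a", unfolded e]
    ultimately show ?thesis using 6 tP sP as sc
      by (simp add: interp_def numer_def)
  qed
qed


lemma fr_part:
  assumes "finitely_refining \<pi>"
  shows "finite (\<pi> n)" "0 \<in> \<pi> n" "1 \<in> \<pi> n" "\<pi> n \<subseteq> {0..1}"
  using assms unfolding finitely_refining_def is_partition_def by auto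

lemma fr_mono:
  assumes "finitely_refining \<pi>" "m \<le> n"
  shows "\<pi> m \<subseteq> \<pi> n"
proof -
  have "\<And>n. \<pi> n \<subseteq> \<pi> (Suc n)" using assms(1) unfolding finitely_refining_def by auto
  then show ?thesis using assms(2) by (rule lift_Suc_mono_le)
qed

lemma new_pt:
  assumes fr: "finitely_refining \<pi>" and s: "s \<in> \<pi> (Suc m) - \<pi> m"
  shows "0 < s" "s < 1" "lo (\<pi> m) s \<in> \<pi> m" "lo (\<pi> m) s < s" "0 \<le> lo (\<pi> m) s"
    "\<And>u. u \<in> \<pi> m \<Longrightarrow> u < s \<Longrightarrow> u \<le> lo (\<pi> m) s"
    "hi (\<pi> (Suc m)) s \<in> \<pi> (Suc m)" "s < hi (\<pi> (Suc m)) s"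
    "\<And>u. u \<in> \<pi> (Suc m) \<Longrightarrow> s < u \<Longrightarrow> hi (\<pi> (Suc m)) s \<le> u"
proof -
  have "s \<in> {0..1}" using fr_part(4)[OF fr, of "Suc m"] s by auto
  moreover have "s \<noteq> 0" "s \<noteq> 1" using fr_part[OF fr, of m] s by auto
  ultimately show s01: "0 < s" "s < 1" by auto
  note L = lo_props[OF fr_part(1)[OF fr, of m] fr_part(2)[OF fr, of m] s01(1)]
  note H = hi_props[OF fr_part(1)[OF fr, of "Suc m"] fr_part(3)[OF fr, of "Suc m"] s01(2)]
  show "lo (\<pi> m) s \<in> \<pi> m" "lo (\<pi> m) s < s"
    "\<And>u. u \<in> \<pi> m \<Longrightarrow> u < s \<Longrightarrow> u \<le> lo (\<pi> m) s"
    "hi (\<pi> (Suc m)) s \<in> \<pi> (Suc m)" "s < hi (\<pi> (Suc m)) s"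
    "\<And>u. u \<in> \<pi> (Suc m) \<Longrightarrow> s < u \<Longrightarrow> hi (\<pi> (Suc m)) s \<le> u"
    using L H by auto
  show "0 \<le> lo (\<pi> m) s" using L(1) fr_part(4)[OF fr, of m] by auto
qed

lemma level_step:
  assumes fr: "finitely_refining \<pi>" and t: "t \<in> {0..1}"
  shows "interp x (\<pi> (Suc m)) t = interp x (\<pi> m) t +
     (\<Sum>s\<in>\<pi> (Suc m) - \<pi> m. Tf x (lo (\<pi> m) s) s (hi (\<pi> (Suc m)) s) t)"
proof -
  define P where "P = \<pi> m"
  define R where "R = \<pi> (Suc m)"
  define Q where "Q = R - P"
  have PR: "P \<subseteq> R" unfolding P_def R_def using fr_mono[OF fr, of m "Suc m"] by simp
  have finP: "finite P" and finQ: "finite Q" unfolding P_def Q_def R_def using fr_part(1)[OF fr] by auto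
  have 0: "0 \<in> P" and 1: "1 \<in> P" unfolding P_def using fr_part[OF fr] by auto
  let ?T = "\<lambda>s. Tf x (lo P s) s (hi R s) t"
  have main: "Q' \<subseteq> Q \<longrightarrow> (\<forall>s\<in>Q'. \<forall>s'\<in>Q. s < s' \<longrightarrow> s' \<in> Q') \<longrightarrow>
      interp x (P \<union> Q') t = interp x P t + sum ?T Q'" if "finite Q'" for Q'
    using that
  proof (induction Q' rule: finite_linorder_min_induct)
    case empty then show ?case by simp
  next
    case (insert b A)
    show ?case
    proof (intro impI)
      assume sub: "insert b A \<subseteq> Q" and up: "\<forall>s\<in>insert b A. \<forall>s'\<in>Q. s < s' \<longrightarrow> s' \<in> insert b A"
      have bA: "b \<notin> A" using insert.hyps by auto
      have upA: "\<forall>s\<in>A. \<forall>s'\<in>Q. s < s' \<longrightarrow> s' \<in> A" using up insert.hyps by force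
      have IH: "interp x (P \<union> A) t = interp x P t + sum ?T A" using insert.IH sub upA by auto
      have bnew: "b \<in> \<pi> (Suc m) - \<pi> m" using sub unfolding Q_def R_def P_def by auto
      note N = new_pt[OF fr bnew, folded P_def R_def]
      have AR: "A \<subseteq> R" using sub unfolding Q_def by auto
      have cPA: "hi R b \<in> P \<union> A"
      proof (cases "hi R b \<in> P")
        case False
        then have "hi R b \<in> Q" using N(7) unfolding Q_def by auto
        then have "hi R b \<in> insert b A" using up N(8) by auto
        then show ?thesis using N(8) by auto
      qed simp
      have "interp x (insert b (P \<union> A)) t = interp x (P \<union> A) t + ?T b"
      proof (rule insert_step)
        show "finite (P \<union> A)" using finP insert.hyps by simp
        show "b \<notin> P \<union> A" using bA bnew P_def by auto
        show "lo P b \<in> P \<union> A" using N(3) by simp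
        show "hi R b \<in> P \<union> A" by (rule cPA)
        show "lo P b < b" "b < hi R b" using N by auto
        show "u \<le> lo P b" if "u \<in> P \<union> A" "u < b" for u
          using that N(6) insert.hyps by force
        show "hi R b \<le> u" if "u \<in> P \<union> A" "b < u" for u
          using that N(9) PR AR by blast
        show "0 \<in> P \<union> A" "0 \<le> t" "1 \<in> P \<union> A" "t \<le> 1" using 0 1 t by auto
      qed
      then show "interp x (P \<union> insert b A) t = interp x P t + sum ?T (insert b A)"
        using IH bA insert.hyps by (simp add: add.commute add.left_commute)
    qed
  qed
  have "interp x (P \<union> Q) t = interp x P t + sum ?T Q" using main[OF finQ] by auto
  moreover have "P \<union> Q = R" using PR unfolding Q_def by auto
  ultimately show ?thesis unfolding P_def R_def Q_def by simp
qed

lemma partial_interp: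
  assumes fr: "finitely_refining \<pi>" and bij: "\<And>m. bij_betw (enum m) {..<level_count \<pi> m} (\<pi> (Suc m) - \<pi> m)"
    and t: "t \<in> {0..1}"
  shows "schauder_partial x \<pi> enum (theta x \<pi> enum) N t = interp x (\<pi> N) t"
proof (induction N)
  case 0
  have p0: "\<pi> 0 = {0, 1}" using fr unfolding finitely_refining_def by auto
  show ?case
  proof (cases "t \<in> {0, 1}")
    case True then show ?thesis using p0 by (auto simp: schauder_partial_def interp_def)
  next
    case False
    have "lo {0,1} t = 0" by (rule lo_eqI) (use t False in auto)
    moreover have "hi {0,1} t = 1" by (rule hi_eqI) (use t False in auto)
    ultimately show ?thesis using p0 False by (simp add: schauder_partial_def interp_def)
  qed
next
  case (Suc N)
  have "(\<Sum>k<level_count \<pi> N. theta x \<pi> enum N k * schauder_fun \<pi> enum N k t) =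
        (\<Sum>k<level_count \<pi> N. (\<lambda>s. Tf x (lo (\<pi> N) s) s (hi (\<pi> (Suc N)) s) t) (enum N k))"
  proof (rule sum.cong)
    fix k assume "k \<in> {..<level_count \<pi> N}"
    then have s: "enum N k \<in> \<pi> (Suc N) - \<pi> N" using bij_betwE[OF bij] by blast
    note N = new_pt[OF fr s]
    show "theta x \<pi> enum N k * schauder_fun \<pi> enum N k t = Tf x (lo (\<pi> N) (enum N k)) (enum N k) (hi (\<pi> (Suc N)) (enum N k)) t"
      unfolding theta_def schauder_fun_def tk1_def tk2_def tk3_def pt1_def pt3_def Let_def
        lo_def[symmetric] hi_def[symmetric] numer_def[symmetric]
      by (rule theta_schauder) (use N t in auto)
  qed simp
  also have "\<dots> = (\<Sum>s\<in>\<pi> (Suc N) - \<pi> N. Tf x (lo (\<pi> N) s) s (hi (\<pi> (Suc N)) s) t)"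
    by (rule sum.reindex_bij_betw[OF bij])
  finally have e: "(\<Sum>k<level_count \<pi> N. theta x \<pi> enum N k * schauder_fun \<pi> enum N k t) =
       (\<Sum>s\<in>\<pi> (Suc N) - \<pi> N. Tf x (lo (\<pi> N) s) s (hi (\<pi> (Suc N)) s) t)" .
  have "schauder_partial x \<pi> enum (theta x \<pi> enum) (Suc N) t =
     schauder_partial x \<pi> enum (theta x \<pi> enum) N t + (\<Sum>k<level_count \<pi> N. theta x \<pi> enum N k * schauder_fun \<pi> enum N k t)"
    by (simp add: schauder_partial_def)
  then show ?case using Suc e level_step[OF fr t] by simp
qed


lemma interp_err:
  fixes e :: real
  assumes P: "finite P" and tP: "t \<notin> P" and l: "l \<in> P" "l < t" and r: "r \<in> P" "t < r"
    and ea: "\<bar>x (lo P t) - x t\<bar> < e" and eb: "\<bar>x (hi P t) - x t\<bar> < e"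
  shows "\<bar>interp x P t - x t\<bar> < e"
proof -
  let ?a = "lo P t" and ?b = "hi P t"
  have a: "?a < t" using lo_props[OF P l] by auto
  have b: "t < ?b" using hi_props[OF P r] by auto
  define p where "p = (?b - t) / (?b - ?a)"
  define q where "q = (t - ?a) / (?b - ?a)"
  have ba: "?b - ?a > 0" using a b by simp
  have p: "p \<ge> 0" and q: "q \<ge> 0" using a b unfolding p_def q_def by auto
  have pq: "p + q = 1" using ba unfolding p_def q_def by (simp add: add_divide_distrib[symmetric])
  have "interp x P t - x t = (x ?a - x t) * p + (x ?b - x t) * q"
  proof -
    have e: "(?b - ?a) - (t - ?a) = ?b - t" by simp
    show ?thesis using tP ba alg_err[of "?b - ?a" "x ?a" "x ?b" "t - ?a" "x t", unfolded e]
      unfolding interp_def p_def q_def by simp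
  qed
  also have "\<bar>\<dots>\<bar> \<le> \<bar>x ?a - x t\<bar> * p + \<bar>x ?b - x t\<bar> * q"
    using p q by (simp add: abs_mult order_trans[OF abs_triangle_ineq])
  also have "\<dots> < e * p + e * q"
  proof -
    have "\<bar>x ?a - x t\<bar> * p \<le> e * p" using ea p by (simp add: mult_right_mono)
    moreover have "\<bar>x ?b - x t\<bar> * q \<le> e * q" using eb q by (simp add: mult_right_mono)
    moreover have "p > 0 \<or> q > 0" using p q pq by auto
    ultimately show ?thesis using ea eb p q by (smt (verit) mult_strict_right_mono)
  qed
  also have "\<dots> = e" using pq by (simp add: distrib_left[symmetric])
  finally show ?thesis .
qed

lemma mesh_ge:
  assumes "finite P" "consecutive P a b"
  shows "b - a \<le> mesh P"
proof -
  have "{b - a | a b. consecutive P a b} \<subseteq> (\<lambda>(a, b). b - a) ` (P \<times> P)"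
    unfolding consecutive_def by force
  then have "finite {b - a | a b. consecutive P a b}" using assms(1)
    by (meson finite_SigmaI finite_imageI finite_subset)
  then show ?thesis unfolding mesh_def using assms(2) by (intro Max_ge) auto
qed

lemma uniform_part:
  assumes fr: "finitely_refining \<pi>" and cont: "continuous_on {0..1} x"
    and bij: "\<And>m. bij_betw (enum m) {..<level_count \<pi> m} (\<pi> (Suc m) - \<pi> m)"
  shows "uniform_limit {0..1} (schauder_partial x \<pi> enum (theta x \<pi> enum)) x sequentially"
  unfolding uniform_limit_sequentially_iff
proof (intro allI impI)
  fix e :: real assume e: "e > 0"
  have "uniformly_continuous_on {0..1} x" using cont by (intro compact_uniformly_continuous) auto
  then obtain d where d: "d > 0" and dx: "\<And>u v. u \<in> {0..1} \<Longrightarrow> v \<in> {0..1} \<Longrightarrow> dist v u < d \<Longrightarrow> dist (x v) (x u) < e"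
    unfolding uniformly_continuous_on_def using e by metis
  have "(\<lambda>n. mesh (\<pi> n)) \<longlonglongrightarrow> 0" using fr unfolding finitely_refining_def by auto
  then have "eventually (\<lambda>n. mesh (\<pi> n) < d) sequentially" using d by (rule order_tendstoD(2))
  then obtain N where N: "\<And>n. n \<ge> N \<Longrightarrow> mesh (\<pi> n) < d" unfolding eventually_sequentially by auto
  show "\<exists>N. \<forall>n\<ge>N. \<forall>t\<in>{0..1}. dist (schauder_partial x \<pi> enum (theta x \<pi> enum) n t) (x t) < e"
  proof (intro exI allI impI ballI)
    fix n and t :: real assume n: "N \<le> n" and t: "t \<in> {0..1}"
    have eq: "schauder_partial x \<pi> enum (theta x \<pi> enum) n t = interp x (\<pi> n) t"
      by (rule partial_interp[OF fr bij t])
    show "dist (schauder_partial x \<pi> enum (theta x \<pi> enum) n t) (x t) < e"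
    proof (cases "t \<in> \<pi> n")
      case True then show ?thesis using eq e by (simp add: interp_in)
    next
      case False
      note P = fr_part[OF fr, of n]
      have t01: "0 < t" "t < 1" using t False P by (auto simp: le_less)
      note L = lo_props[OF P(1) P(2) t01(1)]
      note H = hi_props[OF P(1) P(3) t01(2)]
      have "consecutive (\<pi> n) (lo (\<pi> n) t) (hi (\<pi> n) t)"
        unfolding consecutive_def using L H False by (auto, metis linorder_neqE_linordered_idom not_le)
      then have m: "hi (\<pi> n) t - lo (\<pi> n) t < d" using mesh_ge[OF P(1)] N[OF n] by force
      have "lo (\<pi> n) t \<in> {0..1}" "hi (\<pi> n) t \<in> {0..1}" using L H P(4) by auto
      then have "\<bar>x (lo (\<pi> n) t) - x t\<bar> < e" "\<bar>x (hi (\<pi> n) t) - x t\<bar> < e"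
        using dx[OF t, of "lo (\<pi> n) t"] dx[OF t, of "hi (\<pi> n) t"] m L H by (auto simp: dist_real_def)
      then have "\<bar>interp x (\<pi> n) t - x t\<bar> < e"
        by (intro interp_err[OF P(1) False P(2) t01(1) P(3) t01(2)])
      then show ?thesis using eq by (simp add: dist_real_def)
    qed
  qed
qed


lemma sch_zero:
  assumes "0 \<le> a" "a < s" "s < c" "0 \<le> t" "t \<le> a \<or> c \<le> t"
  shows "schauder a s c t = 0"
  using assms h_rel[of a s c] by (auto simp: schauder_formula max_def min_def)

lemma sf_eq:
  "schauder_fun \<pi> enum m k t = schauder (lo (\<pi> m) (enum m k)) (enum m k) (hi (\<pi> (Suc m)) (enum m k)) t"
  unfolding schauder_fun_def tk1_def tk2_def tk3_def pt1_def pt3_def lo_def hi_def ..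

lemma enum_in:
  assumes bij: "\<And>m. bij_betw (enum m) {..<level_count \<pi> m} (\<pi> (Suc m) - \<pi> m)" and k: "k < level_count \<pi> m"
  shows "enum m k \<in> \<pi> (Suc m) - \<pi> m"
  using bij_betwE[OF bij] k by blast

lemma sf_zero_low:
  assumes fr: "finitely_refining \<pi>" and bij: "\<And>m. bij_betw (enum m) {..<level_count \<pi> m} (\<pi> (Suc m) - \<pi> m)"
    and k: "k < level_count \<pi> j" and t: "t \<in> \<pi> j"
  shows "schauder_fun \<pi> enum j k t = 0"
proof -
  have s: "enum j k \<in> \<pi> (Suc j) - \<pi> j" by (rule enum_in[OF bij k])
  note N = new_pt[OF fr s]
  have t0: "0 \<le> t" using t fr_part(4)[OF fr, of j] by auto
  have tS: "t \<in> \<pi> (Suc j)" using t fr_mono[OF fr, of j "Suc j"] by auto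
  have "t \<noteq> enum j k" using s t by auto
  then have "t \<le> lo (\<pi> j) (enum j k) \<or> hi (\<pi> (Suc j)) (enum j k) \<le> t"
    using N(6)[OF t] N(9)[OF tS] by (meson linorder_neqE_linordered_idom)
  then show ?thesis unfolding sf_eq by (intro sch_zero) (use N t0 in auto)
qed

lemma sf_zero_above:
  assumes fr: "finitely_refining \<pi>" and bij: "\<And>m. bij_betw (enum m) {..<level_count \<pi> m} (\<pi> (Suc m) - \<pi> m)"
    and k: "k < level_count \<pi> m" and t: "t \<in> \<pi> (Suc m)" "enum m k < t"
  shows "schauder_fun \<pi> enum m k t = 0"
proof -
  have s: "enum m k \<in> \<pi> (Suc m) - \<pi> m" by (rule enum_in[OF bij k])
  note N = new_pt[OF fr s]
  show ?thesis unfolding sf_eq by (intro sch_zero) (use N t in auto)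
qed

lemma sf_pos:
  assumes fr: "finitely_refining \<pi>" and bij: "\<And>m. bij_betw (enum m) {..<level_count \<pi> m} (\<pi> (Suc m) - \<pi> m)"
    and k: "k < level_count \<pi> m"
  shows "schauder_fun \<pi> enum m k (enum m k) > 0"
proof -
  have s: "enum m k \<in> \<pi> (Suc m) - \<pi> m" by (rule enum_in[OF bij k])
  note N = new_pt[OF fr s]
  show ?thesis unfolding sf_eq using N
    by (simp add: schauder_formula h1_pos)
qed

lemma unique_part:
  assumes fr: "finitely_refining \<pi>" and bij: "\<And>m. bij_betw (enum m) {..<level_count \<pi> m} (\<pi> (Suc m) - \<pi> m)"
    and H: "\<forall>t\<in>{0..1}. (\<lambda>N. schauder_partial x \<pi> enum \<theta>' N t) \<longlonglongrightarrow> x t"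
  shows "\<forall>k<level_count \<pi> m. \<theta>' m k = theta x \<pi> enum m k"
proof (induction m rule: less_induct)
  case (less m)
  let ?th = "theta x \<pi> enum"
  have eqm: "schauder_partial x \<pi> enum \<theta>' m t = schauder_partial x \<pi> enum ?th m t" for t
    unfolding schauder_partial_def using less by (intro arg_cong2[where f="(+)"] refl sum.cong) auto
  define d where "d k = \<theta>' m k - ?th m k" for k
  have D0: "(\<Sum>k<level_count \<pi> m. d k * schauder_fun \<pi> enum m k t) = 0" if tS: "t \<in> \<pi> (Suc m)" for t
  proof -
    have t: "t \<in> {0..1}" using tS fr_part(4)[OF fr, of "Suc m"] by auto
    have const: "schauder_partial x \<pi> enum \<theta>' (n + Suc m) t = schauder_partial x \<pi> enum \<theta>' (Suc m) t" for n
    proof (induction n)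
      case (Suc n)
      have "t \<in> \<pi> (n + Suc m)" using tS fr_mono[OF fr, of "Suc m" "n + Suc m"] by auto
      then have "(\<Sum>k<level_count \<pi> (n + Suc m). \<theta>' (n + Suc m) k * schauder_fun \<pi> enum (n + Suc m) k t) = 0"
        by (intro sum.neutral) (use sf_zero_low[OF fr bij] in auto)
      then show ?case using Suc by (simp add: schauder_partial_def)
    qed simp
    have "(\<lambda>n. schauder_partial x \<pi> enum \<theta>' (n + Suc m) t) \<longlonglongrightarrow> x t"
      using LIMSEQ_ignore_initial_segment H t by blast
    then have "(\<lambda>n. schauder_partial x \<pi> enum \<theta>' (Suc m) t) \<longlonglongrightarrow> x t" unfolding const .
    then have A: "schauder_partial x \<pi> enum \<theta>' (Suc m) t = x t" using LIMSEQ_const_iff by blast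
    have B: "schauder_partial x \<pi> enum ?th (Suc m) t = x t"
      using partial_interp[OF fr bij t] tS by (simp add: interp_in)
    have "schauder_partial x \<pi> enum \<theta>' (Suc m) t - schauder_partial x \<pi> enum ?th (Suc m) t =
        (\<Sum>k<level_count \<pi> m. \<theta>' m k * schauder_fun \<pi> enum m k t) - (\<Sum>k<level_count \<pi> m. ?th m k * schauder_fun \<pi> enum m k t)"
      using eqm[of t] by (simp add: schauder_partial_def)
    also have "\<dots> = (\<Sum>k<level_count \<pi> m. d k * schauder_fun \<pi> enum m k t)"
      unfolding d_def by (simp add: sum_subtractf left_diff_distrib)
    finally show ?thesis using A B by simp
  qed
  show ?case
  proof (rule ccontr)
    assume "\<not> (\<forall>k<level_count \<pi> m. \<theta>' m k = ?th m k)"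
    define K where "K = {k\<in>{..<level_count \<pi> m}. d k \<noteq> 0}"
    have Kne: "K \<noteq> {}" using \<open>\<not> _\<close> unfolding K_def d_def by auto
    have Kfin: "finite (enum m ` K)" unfolding K_def by simp
    define s0 where "s0 = Max (enum m ` K)"
    have "s0 \<in> enum m ` K" unfolding s0_def using Kfin Kne by (intro Max_in) auto
    then obtain k0 where k0: "k0 \<in> K" "enum m k0 = s0" by auto
    have k0l: "k0 < level_count \<pi> m" using k0 unfolding K_def by auto
    have inj: "inj_on (enum m) {..<level_count \<pi> m}" using bij bij_betw_def by blast
    have s0S: "s0 \<in> \<pi> (Suc m)" using enum_in[OF bij k0l] k0 by auto
    have "(\<Sum>k<level_count \<pi> m. d k * schauder_fun \<pi> enum m k s0) =
        d k0 * schauder_fun \<pi> enum m k0 s0 + (\<Sum>k\<in>{..<level_count \<pi> m} - {k0}. d k * schauder_fun \<pi> enum m k s0)"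
      using k0l by (simp add: sum.remove)
    also have "(\<Sum>k\<in>{..<level_count \<pi> m} - {k0}. d k * schauder_fun \<pi> enum m k s0) = 0"
    proof (rule sum.neutral, rule ballI)
      fix k assume k: "k \<in> {..<level_count \<pi> m} - {k0}"
      show "d k * schauder_fun \<pi> enum m k s0 = 0"
      proof (cases "d k = 0")
        case False
        then have "k \<in> K" using k unfolding K_def by auto
        then have "enum m k \<le> s0" unfolding s0_def using Kfin by (intro Max_ge) auto
        moreover have "enum m k \<noteq> s0" using inj k k0l k0(2) unfolding inj_on_def by auto
        ultimately have "enum m k < s0" by simp
        then show ?thesis using sf_zero_above[OF fr bij _ s0S] k by auto
      qed simp
    qed
    finally have "d k0 * schauder_fun \<pi> enum m k0 s0 = 0" using D0[OF s0S] by simp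
    moreover have "schauder_fun \<pi> enum m k0 s0 > 0" using sf_pos[OF fr bij k0l] k0 by simp
    moreover have "d k0 \<noteq> 0" using k0 unfolding K_def by auto
    ultimately show False by simp
  qed
qed

theorem mainTheorem3:
  fixes \<pi> :: "nat \<Rightarrow> real set" and x :: "real \<Rightarrow> real" and enum :: "nat \<Rightarrow> nat \<Rightarrow> real"
  assumes "finitely_refining \<pi>"
    and "continuous_on {0..1} x"
    and "\<And>m. bij_betw (enum m) {..<level_count \<pi> m} (\<pi> (Suc m) - \<pi> m)"
  shows "uniform_limit {0..1} (schauder_partial x \<pi> enum (theta x \<pi> enum)) x sequentially \<and>
         (\<forall>\<theta>'. (\<forall>t\<in>{0..1}. (\<lambda>N. schauder_partial x \<pi> enum \<theta>' N t) \<longlonglongrightarrow> x t) \<longrightarrow>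
           (\<forall>m. \<forall>k<level_count \<pi> m. \<theta>' m k = theta x \<pi> enum m k))"
  using uniform_part[OF assms] unique_part[OF assms(1,3)] by blast

end
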